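(* Let $X$ be a completely regular Hausdorff space and let $A(X)$ be an adequate subspace of $C(X)$, with $A(X)$-compactification $\mathcal{A}X$. Let $x_0\in\mathcal{A}X$, $f\in A(X)$, and let $U$ be a neighborhood of $x_0(f)$ in $[-\infty,\infty]$; set $V=\{x\in\mathcal{A}X: x(f)\in U\}$. Then there exists $h\in A(X)$ with $0\le h\le 1_X$ and $x_0(h)=0$ such that $W=\{x\in\mathcal{A}X: x(h)<1\}\subseteq V$.
   Context: All functions are real-valued; $C(X)$ is the space of continuous real functions on $X$ and $1_X$ the constant function $1$. A subspace $A(X)\subseteq C(X)$ separates points from closed sets if for every $x\in X$ and closed $F\subseteq X$ with $x\notin F$ there is $f\in A(X)$ with $f(x)=1$ and $f=0$ on $F$. $A(X)$ is adequate if (a) it separates points from closed sets and contains the constant functions; (b) there is a continuous nondecreasing $g:\mathbb{R}\to\mathbb{R}$ with $g(t)=0$ for $t\le 0$ and $g(t)=1$ for $t\ge1$ such that $g\circ f\in A(X)$ for all $f\in A(X)$; (c) every $f\in A(X)$ can be written $f=f_1-f_2$ with $f_1,f_2\in A(X)$ nonnegative. The $A(X)$-compactification: let $[-\infty,\infty]$ carry the order topology; the map $i:X\to[-\infty,\infty]^{A(X)}$, $i(x)(\varphi)=\varphi(x)$, is a homeomorphic embedding; $\mathcal{A}X$ is the closure of $i(X)$ in the product $[-\infty,\infty]^{A(X)}$ (a compact Hausdorff space), and $X$ is identified with $i(X)\subseteq\mathcal{A}X$. Points $x\in\mathcal{A}X$ are functions on $A(X)$, and $x(f)$ denotes the value at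 $f$; the map $\hat f:\mathcal{A}X\to[-\infty,\infty]$, $\hat f(x)=x(f)$, is the unique continuous extension of $f$. *)

theory Defs
  imports "HOL-Analysis.Analysis" "HOL-Library.Extended_Real"
begin

definition is_subspace_CX :: "'a topology \<Rightarrow> ('a \<Rightarrow> real) set \<Rightarrow> bool" where
  "is_subspace_CX X A \<longleftrightarrow>
     (\<forall>f\<in>A. continuous_map X euclideanreal f) \<and>
     (\<lambda>x. 0) \<in> A \<and>
     (\<forall>f\<in>A. \<forall>g\<in>A. (\<lambda>x. f x + g x) \<in> A) \<and>
     (\<forall>c. \<forall>f\<in>A. (\<lambda>x. c * f x) \<in> A)"

definition separates_points_closed :: "'a topology \<Rightarrow> ('a \<Rightarrow> real) set \<Rightarrow> bool" where
  "separates_points_closed X A \<longleftrightarrow>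
     (\<forall>x\<in>topspace X. \<forall>F. closedin X F \<and> x \<notin> F \<longrightarrow>
        (\<exists>f\<in>A. f x = 1 \<and> (\<forall>y\<in>F. f y = 0)))"

definition adequate :: "'a topology \<Rightarrow> ('a \<Rightarrow> real) set \<Rightarrow> bool" where
  "adequate X A \<longleftrightarrow>
     is_subspace_CX X A \<and>
     separates_points_closed X A \<and> (\<forall>c. (\<lambda>x. c) \<in> A) \<and>
     (\<exists>g::real\<Rightarrow>real. continuous_on UNIV g \<and> mono g \<and>
        (\<forall>t\<le>0. g t = 0) \<and> (\<forall>t\<ge>1. g t = 1) \<and> (\<forall>f\<in>A. g \<circ> f \<in> A)) \<and>
     (\<forall>f\<in>A. \<exists>f1\<in>A. \<exists>f2\<in>A. (\<forall>x\<in>topspace X. f1 x \<ge> 0 \<and> f2 x \<ge> 0 \<and> f x = f1 x - f2 x))"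

definition AX_product :: "('a \<Rightarrow> real) set \<Rightarrow> (('a \<Rightarrow> real) \<Rightarrow> ereal) topology" where
  "AX_product A = product_topology (\<lambda>_. (euclidean :: ereal topology)) A"

definition AX_embed :: "('a \<Rightarrow> real) set \<Rightarrow> 'a \<Rightarrow> (('a \<Rightarrow> real) \<Rightarrow> ereal)" where
  "AX_embed A x = restrict (\<lambda>f. ereal (f x)) A"

definition AX :: "'a topology \<Rightarrow> ('a \<Rightarrow> real) set \<Rightarrow> (('a \<Rightarrow> real) \<Rightarrow> ereal) set" where
  "AX X A = (AX_product A) closure_of (AX_embed A ` topspace X)"

end

theory Submission
  imports Defs
begin

lemma approx_pt:
  assumes "y \<in> AX X A" "f \<in> A" "h \<in> A" "open O1" "open O2" "y f \<in> O1" "y h \<in> O2"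
  shows "\<exists>p\<in>topspace X. ereal (f p) \<in> O1 \<and> ereal (h p) \<in> O2"
proof -
  define T where "T = {z \<in> topspace (AX_product A). z f \<in> O1} \<inter> {z \<in> topspace (AX_product A). z h \<in> O2}"
  have c1: "continuous_map (AX_product A) euclidean (\<lambda>z. z f)"
    unfolding AX_product_def using assms(2) by (rule continuous_map_product_projection)
  have c2: "continuous_map (AX_product A) euclidean (\<lambda>z. z h)"
    unfolding AX_product_def using assms(3) by (rule continuous_map_product_projection)
  have o1: "openin (AX_product A) {z \<in> topspace (AX_product A). z f \<in> O1}"
    by (rule openin_continuous_map_preimage[OF c1 open_openin[THEN iffD1, OF assms(4)]])
  have o2: "openin (AX_product A) {z \<in> topspace (AX_product A). z h \<in> O2}"
    by (rule openin_continuous_map_preimage[OF c2 open_openin[THEN iffD1, OF assms(5)]])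
  have oT: "openin (AX_product A) T" unfolding T_def using o1 o2 by (rule openin_Int)
  have yc: "y \<in> AX_product A closure_of (AX_embed A ` topspace X)"
    using assms(1) unfolding AX_def .
  then have yt: "y \<in> topspace (AX_product A)" by (simp add: in_closure_of)
  have "y \<in> T" unfolding T_def using yt assms(6,7) by simp
  then obtain z where "z \<in> AX_embed A ` topspace X" "z \<in> T"
    using yc oT unfolding in_closure_of by blast
  then obtain p where "p \<in> topspace X" "z = AX_embed A p" by auto
  then show ?thesis using \<open>z \<in> T\<close> assms(2,3) by (auto simp: AX_embed_def T_def)
qed

lemma key:
  assumes "x0 \<in> AX X A" "f \<in> A" "h \<in> A" "open Oa" "x0 f \<in> Oa" "open O'" "S \<union> O' = UNIV"
    and "\<forall>p\<in>topspace X. ereal (f p) \<in> Oa \<longrightarrow> h p = 0"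
    and "\<forall>p\<in>topspace X. ereal (f p) \<in> O' \<longrightarrow> h p = 1"
  shows "x0 h = 0 \<and> {x \<in> AX X A. x h < 1} \<subseteq> {x \<in> AX X A. x f \<in> S}"
proof
  show "x0 h = 0"
  proof (rule ccontr)
    assume "x0 h \<noteq> 0"
    then have "x0 h \<in> - {0}" by simp
    from approx_pt[OF assms(1,2,3,4) _ assms(5) this] obtain p where
      "p \<in> topspace X" "ereal (f p) \<in> Oa" "ereal (h p) \<in> -{0}" by auto
    with assms(8) show False by auto
  qed
  show "{x \<in> AX X A. x h < 1} \<subseteq> {x \<in> AX X A. x f \<in> S}"
  proof clarify
    fix y assume y: "y \<in> AX X A" "y h < 1"
    show "y f \<in> S"
    proof (rule ccontr)
      assume "y f \<notin> S"
      then have "y f \<in> O'" using assms(7) by auto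
      from approx_pt[OF y(1) assms(2,3,6) _ this, of "{..<1}"] y(2) obtain p where
        "p \<in> topspace X" "ereal (f p) \<in> O'" "ereal (h p) \<in> {..<1}" by auto
      with assms(9) show False by auto
    qed
  qed
qed

theorem lemma3p2:
  fixes X :: "'a topology" and A :: "('a \<Rightarrow> real) set"
    and x0 :: "('a \<Rightarrow> real) \<Rightarrow> ereal" and f :: "'a \<Rightarrow> real" and U :: "ereal set"
  assumes "completely_regular_space X" and "Hausdorff_space X"
    and "adequate X A"
    and "x0 \<in> AX X A" and "f \<in> A"
    and "\<exists>S. open S \<and> x0 f \<in> S \<and> S \<subseteq> U"
  shows "\<exists>h\<in>A. (\<forall>x\<in>topspace X. 0 \<le> h x \<and> h x \<le> 1) \<and> x0 h = 0 \<and>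
           {x \<in> AX X A. x h < 1} \<subseteq> {x \<in> AX X A. x f \<in> U}"
proof -
  obtain S where S: "open S" "x0 f \<in> S" "S \<subseteq> U" using assms(6) by blast
  obtain g :: "real \<Rightarrow> real" where g: "mono g" "\<forall>t\<le>0. g t = 0" "\<forall>t\<ge>1. g t = 1"
    "\<forall>f\<in>A. g \<circ> f \<in> A"
    using assms(3) unfolding adequate_def by blast
  have sub: "is_subspace_CX X A" and const: "\<forall>c. (\<lambda>x. c) \<in> A"
    using assms(3) unfolding adequate_def by auto
  have add: "(\<lambda>x. p x + q x) \<in> A" if "p \<in> A" "q \<in> A" for p q
    using sub that unfolding is_subspace_CX_def by blast
  have aff: "(\<lambda>x. c * f x + d) \<in> A" for c d
  proof -
    have "(\<lambda>x. c * f x) \<in> A" using sub assms(5) unfolding is_subspace_CX_def by blast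
    from add[OF this const[rule_format, of d]] show ?thesis by simp
  qed
  have gA: "(\<lambda>x. g (c * f x + d)) \<in> A" for c d
    using g(4) aff[of c d] by (simp add: o_def)
  have g0: "0 \<le> g t" for t
  proof (cases "t \<le> 0")
    case False then have "g 0 \<le> g t" using g(1) by (simp add: mono_def)
    then show ?thesis using g(2) by auto
  qed (use g(2) in auto)
  have g1: "g t \<le> 1" for t
  proof (cases "t \<ge> 1")
    case False then have "g t \<le> g 1" using g(1) by (simp add: mono_def)
    then show ?thesis using g(3) by auto
  qed (use g(3) in auto)
  have fin: "\<exists>h\<in>A. (\<forall>x\<in>topspace X. 0 \<le> h x \<and> h x \<le> 1) \<and> x0 h = 0 \<and>
           {x \<in> AX X A. x h < 1} \<subseteq> {x \<in> AX X A. x f \<in> S}"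
  proof (cases "x0 f")
    case (real a)
    note xa = real
    obtain e where e: "e > 0" "{x0 f - e <..< x0 f + e} \<subseteq> S"
      using ereal_open_cont_interval[OF S(1,2)] real by auto
    have "\<exists>r>0. {ereal (a - r) <..< ereal (a + r)} \<subseteq> S"
    proof (cases e)
      case (real r) then show ?thesis using e xa by (intro exI[of _ r]) auto
    next
      case PInf
      have "{ereal (a - 1) <..< ereal (a + 1)} \<subseteq> {x0 f - e <..< x0 f + e}"
        using PInf xa by auto
      then show ?thesis using e by (intro exI[of _ 1]) auto
    qed (use e in auto)
    then obtain r where r: "r > 0" "{ereal (a - r) <..< ereal (a + r)} \<subseteq> S" by blast
    define \<epsilon> where "\<epsilon> = r / 3"
    have ep: "\<epsilon> > 0" using r by (simp add: \<epsilon>_def)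
    define h where "h = (\<lambda>x. g ((1/\<epsilon>) * f x + (- a/\<epsilon> - 1)) + g ((-1/\<epsilon>) * f x + (a/\<epsilon> - 1)))"
    have hA: "h \<in> A" unfolding h_def using add gA by blast
    have hv: "h x = g ((f x - a - \<epsilon>)/\<epsilon>) + g ((a - \<epsilon> - f x)/\<epsilon>)" for x
    proof -
      have e1: "(1/\<epsilon>) * f x + (- a/\<epsilon> - 1) = (f x - a - \<epsilon>)/\<epsilon>"
        using ep by (simp add: field_simps)
      have e2: "(-1/\<epsilon>) * f x + (a/\<epsilon> - 1) = (a - \<epsilon> - f x)/\<epsilon>"
        using ep by (simp add: field_simps)
      show ?thesis unfolding h_def e1 e2 ..
    qed
    have bnd: "0 \<le> h x \<and> h x \<le> 1" for x
    proof (cases "f x \<ge> a - \<epsilon>")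
      case True
      then have "(a - \<epsilon> - f x)/\<epsilon> \<le> 0" using ep by (simp add: divide_nonpos_pos)
      then show ?thesis unfolding hv using g g0 g1 by auto
    next
      case False
      then have "(f x - a - \<epsilon>)/\<epsilon> \<le> 0" using ep by (simp add: divide_nonpos_pos)
      then show ?thesis unfolding hv using g g0 g1 by auto
    qed
    have k: "x0 h = 0 \<and> {x \<in> AX X A. x h < 1} \<subseteq> {x \<in> AX X A. x f \<in> S}"
    proof (rule key[OF assms(4,5) hA, of "{ereal (a - \<epsilon>) <..< ereal (a + \<epsilon>)}"
          "{ereal (a + 2*\<epsilon>) <..} \<union> {..< ereal (a - 2*\<epsilon>)}"])
      show "x0 f \<in> {ereal (a - \<epsilon>)<..<ereal (a + \<epsilon>)}" using xa ep by auto
      show "S \<union> ({ereal (a + 2 * \<epsilon>)<..} \<union> {..<ereal (a - 2 * \<epsilon>)}) = UNIV"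
      proof -
        have "{ereal (a - 3*\<epsilon>) <..< ereal (a + 3*\<epsilon>)} \<subseteq> S"
          using r by (simp add: \<epsilon>_def)
        moreover have "t \<in> {ereal (a - 3*\<epsilon>) <..< ereal (a + 3*\<epsilon>)} \<or>
            t \<in> {ereal (a + 2 * \<epsilon>)<..} \<union> {..<ereal (a - 2 * \<epsilon>)}" for t
          using ep by (cases t) auto
        ultimately show ?thesis by blast
      qed
      show "\<forall>p\<in>topspace X. ereal (f p) \<in> {ereal (a - \<epsilon>)<..<ereal (a + \<epsilon>)} \<longrightarrow> h p = 0"
      proof clarify
        fix p assume "ereal (f p) \<in> {ereal (a - \<epsilon>)<..<ereal (a + \<epsilon>)}"
        then have "(f p - a - \<epsilon>)/\<epsilon> \<le> 0" "(a - \<epsilon> - f p)/\<epsilon> \<le> 0"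
          using ep by (auto simp: divide_nonpos_pos)
        then show "h p = 0" unfolding hv using g by auto
      qed
      show "\<forall>p\<in>topspace X. ereal (f p) \<in> {ereal (a + 2 * \<epsilon>)<..} \<union> {..<ereal (a - 2 * \<epsilon>)} \<longrightarrow> h p = 1"
      proof clarify
        fix p assume "ereal (f p) \<in> {ereal (a + 2 * \<epsilon>)<..} \<union> {..<ereal (a - 2 * \<epsilon>)}"
        then have "f p > a + 2*\<epsilon> \<or> f p < a - 2*\<epsilon>" by auto
        then show "h p = 1"
        proof
          assume H: "f p > a + 2*\<epsilon>"
          then have "(f p - a - \<epsilon>)/\<epsilon> \<ge> 1" "(a - \<epsilon> - f p)/\<epsilon> \<le> 0"
            using ep by (auto simp: divide_nonpos_pos le_divide_eq)
          then show ?thesis unfolding hv using g by auto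
        next
          assume H: "f p < a - 2*\<epsilon>"
          then have "(f p - a - \<epsilon>)/\<epsilon> \<le> 0" "(a - \<epsilon> - f p)/\<epsilon> \<ge> 1"
            using ep by (auto simp: divide_nonpos_pos le_divide_eq)
          then show ?thesis unfolding hv using g by auto
        qed
      qed
    qed auto
    show ?thesis using hA bnd k by blast
  next
    case PInf
    obtain M where M: "{ereal M <..} \<subseteq> S" using open_PInfty[OF S(1)] S(2) PInf by auto
    define h where "h = (\<lambda>x. g ((-2) * f x + 2*(M+1)))"
    have hA: "h \<in> A" unfolding h_def using gA by blast
    have k: "x0 h = 0 \<and> {x \<in> AX X A. x h < 1} \<subseteq> {x \<in> AX X A. x f \<in> S}"
    proof (rule key[OF assms(4,5) hA, of "{ereal (M+1) <..}" "{..< ereal (M + 1/2)}"])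
      show "S \<union> {..< ereal (M + 1/2)} = UNIV"
      proof -
        have "t \<in> {ereal M <..} \<or> t \<in> {..< ereal (M + 1/2)}" for t by (cases t) auto
        then show ?thesis using M by blast
      qed
    qed (auto simp: h_def PInf g)
    have "\<forall>x\<in>topspace X. 0 \<le> h x \<and> h x \<le> 1" using g0 g1 by (simp add: h_def)
    then show ?thesis using hA k by blast
  next
    case MInf
    obtain M where M: "{..< ereal M} \<subseteq> S" using open_MInfty[OF S(1)] S(2) MInf by auto
    define h where "h = (\<lambda>x. g (2 * f x + (- 2*(M - 1))))"
    have hA: "h \<in> A" unfolding h_def using gA by blast
    have k: "x0 h = 0 \<and> {x \<in> AX X A. x h < 1} \<subseteq> {x \<in> AX X A. x f \<in> S}"
    proof (rule key[OF assms(4,5) hA, of "{..< ereal (M - 1)}" "{ereal (M - 1/2) <..}"])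
      show "S \<union> {ereal (M - 1/2) <..} = UNIV"
      proof -
        have "t \<in> {..< ereal M} \<or> t \<in> {ereal (M - 1/2) <..}" for t by (cases t) auto
        then show ?thesis using M by blast
      qed
    qed (auto simp: h_def MInf g)
    have "\<forall>x\<in>topspace X. 0 \<le> h x \<and> h x \<le> 1" using g0 g1 by (simp add: h_def)
    then show ?thesis using hA k by blast
  qed
  then show ?thesis using S(3) by blast
qed

end
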